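(* In base $B=2$, for every integer $\eta\ge 2$, $$\gamma_2(\eta)=\Bigl(2^{-1}\,2\uparrow\uparrow(\eta-1)\Bigr)^{3}-1,$$ i.e. with $E_1=2^{-1}2^{3}$ and $E_{m+1}=2^{-1}2^{E_m}$ for $m\ge1$, one has $\gamma_2(\eta)=E_{\eta-1}-1$.
   Context: Every integer $x>0$ is written uniquely in base $2$ as $x=\sum_{i} x_i 2^i$ with binary digits $x_i$. Define $\mathcal{H}_2(x)=\sum_{i} x_i^2$, $\mathcal{H}_2^0(x)=x$, $\mathcal{H}_2^n=\mathcal{H}_2\circ\mathcal{H}_2^{n-1}$. A positive integer $x$ is happy if $\mathcal{H}_2^n(x)=1$ for some $n\in\mathbb{N}$; its height is $\eta_2(x)=\min\{\alpha\in\mathbb{N}:\mathcal{H}_2^\alpha(x)=1\}$. For $n\in\mathbb{N}$, $\gamma_2(n)$ denotes the smallest happy number $x\ge1$ with $\eta_2(x)=n$. Adapted up-arrow notation: for reals $k,x,y,z$ and integer $n\ge1$, $k(xy\uparrow\uparrow n)^z=k\,E_n$ where $E_1=x\,y^{z}$ and $E_{m+1}=x\,y^{E_m}$ (the factor "$xy$" is repeated $n$ times in the tower $k\,x y^{x y^{\cdot^{\cdot^{x y^{z}}}}}$); an omitted $k$ means $k=1$. *)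

theory Defs
  imports Complex_Main
begin

text \<open>Binary digit i of x, and the base-2 squared-digit-sum map.
  Digits with index > x vanish since x < 2^(x+1).\<close>
definition bdigit :: "nat \<Rightarrow> nat \<Rightarrow> nat" where
  "bdigit x i = (x div 2 ^ i) mod 2"

definition H2 :: "nat \<Rightarrow> nat" where
  "H2 x = (\<Sum>i\<le>x. (bdigit x i)^2)"

definition happy2 :: "nat \<Rightarrow> bool" where
  "happy2 x \<longleftrightarrow> x > 0 \<and> (\<exists>n. (H2 ^^ n) x = 1)"

definition eta2 :: "nat \<Rightarrow> nat" where
  "eta2 x = (LEAST a. (H2 ^^ a) x = 1)"

definition gamma2 :: "nat \<Rightarrow> nat" where
  "gamma2 n = (LEAST x. x \<ge> 1 \<and> happy2 x \<and> eta2 x = n)"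

text \<open>Adapted up-arrow: k (x y \<up>\<up> n)^z = k * E_n with E_1 = x*y^z,
  E_(m+1) = x*y^(E_m).\<close>
fun tower_E :: "real \<Rightarrow> real \<Rightarrow> real \<Rightarrow> nat \<Rightarrow> real" where
  "tower_E x y z 0 = z"
| "tower_E x y z (Suc m) = x * y powr (tower_E x y z m)"

definition uparrow :: "real \<Rightarrow> real \<Rightarrow> real \<Rightarrow> nat \<Rightarrow> real \<Rightarrow> real" where
  "uparrow k x y n z = k * tower_E x y z n"

end

theory Submission
  imports Defs
begin

fun pc :: "nat \<Rightarrow> nat" where
  "pc x = (if x = 0 then 0 else x mod 2 + pc (x div 2))"
declare pc.simps[simp del]

lemma pc0[simp]: "pc 0 = 0" by (simp add: pc.simps)
lemma pc_eq: "x > 0 \<Longrightarrow> pc x = x mod 2 + pc (x div 2)" by (subst pc.simps) simp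

lemma S_shift: "(\<Sum>i<Suc k. bdigit x i) = x mod 2 + (\<Sum>i<k. bdigit (x div 2) i)"
proof -
  have "(\<Sum>i<Suc k. bdigit x i) = bdigit x 0 + (\<Sum>i<k. bdigit x (Suc i))"
    by (rule sum.lessThan_Suc_shift)
  also have "(\<Sum>i<k. bdigit x (Suc i)) = (\<Sum>i<k. bdigit (x div 2) i)"
    by (intro sum.cong) (auto simp: bdigit_def div_mult2_eq)
  finally show ?thesis by (simp add: bdigit_def)
qed

lemma S_pc: "x < 2^k \<Longrightarrow> (\<Sum>i<k. bdigit x i) = pc x"
proof (induction k arbitrary: x)
  case 0 then show ?case by simp
next
  case (Suc k)
  have "x div 2 < 2^k" using Suc.prems by auto
  then show ?case using Suc.IH[of "x div 2"] S_shift[where k=k and x=x]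
    by (cases "x = 0") (simp_all add: pc_eq[of x])
qed

lemma H2_pc: "H2 x = pc x"
proof -
  have "bdigit x i ^ 2 = bdigit x i" for i by (cases "bdigit x i = 0") (auto simp: bdigit_def)
  hence "H2 x = (\<Sum>i<Suc x. bdigit x i)" unfolding H2_def
    by (simp add: lessThan_Suc_atMost)
  also have "\<dots> = pc x" by (rule S_pc) (metis less_exp lessI less_trans)
  finally show ?thesis .
qed

lemma pc_pos: "x \<ge> 1 \<Longrightarrow> pc x \<ge> 1"
proof (induction x rule: less_induct)
  case (less x)
  show ?case
  proof (cases "x mod 2 = 0")
    case True
    hence "x div 2 \<ge> 1" "x div 2 < x" using less.prems by auto
    then show ?thesis using less.IH[of "x div 2"] less.prems by (simp add: pc_eq[of x])
  next
    case False then show ?thesis using less.prems by (simp add: pc_eq[of x])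
  qed
qed

lemma pc_le: "pc x \<le> x"
proof (induction x rule: less_induct)
  case (less x)
  show ?case
  proof (cases "x = 0")
    case True then show ?thesis by simp
  next
    case False
    hence "pc (x div 2) \<le> x div 2" using less.IH by simp
    then show ?thesis using False by (simp add: pc_eq[of x])
  qed
qed

lemma pc_lt: "x \<ge> 2 \<Longrightarrow> pc x < x"
proof -
  assume "x \<ge> 2"
  hence "pc (x div 2) \<le> x div 2" "x div 2 \<ge> 1" using pc_le by auto
  moreover have "x = 2 * (x div 2) + x mod 2" by simp
  moreover have "pc x = x mod 2 + pc (x div 2)" using \<open>x \<ge> 2\<close> by (simp add: pc_eq)
  ultimately show ?thesis by linarith
qed

lemma pc_bound: "2 ^ pc x \<le> x + 1"
proof (induction x rule: less_induct)
  case (less x)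
  show ?case
  proof (cases "x = 0")
    case True then show ?thesis by simp
  next
    case False
    hence ih: "2 ^ pc (x div 2) \<le> x div 2 + 1" using less.IH by simp
    have "(2::nat) ^ pc x = 2 ^ (x mod 2) * 2 ^ pc (x div 2)"
      using False by (simp add: pc_eq[of x] power_add)
    also have "\<dots> \<le> 2 ^ (x mod 2) * (x div 2 + 1)" using ih by (intro mult_left_mono) auto
    also have "\<dots> \<le> x + 1"
      by (cases "x mod 2 = 0") (auto, presburger+)
    finally show ?thesis .
  qed
qed

lemma pc_mersenne: "pc (2^m - 1) = m"
proof (induction m)
  case 0 then show ?case by simp
next
  case (Suc m)
  have p: "(1::nat) \<le> 2^m" by simp
  have e: "(2::nat)^Suc m - 1 = 2 * (2^m - 1) + 1" by (simp only: power_Suc) (use p in arith)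
  show ?case unfolding e using Suc by (subst pc_eq) simp_all
qed

lemma reach: "x \<ge> 1 \<Longrightarrow> \<exists>n. (H2 ^^ n) x = 1"
proof (induction x rule: less_induct)
  case (less x)
  show ?case
  proof (cases "x = 1")
    case True then show ?thesis by (metis funpow_0)
  next
    case False
    hence "x \<ge> 2" using less.prems by simp
    hence "H2 x < x" "H2 x \<ge> 1" using pc_lt pc_pos H2_pc less.prems by auto
    then obtain n where "(H2 ^^ n) (H2 x) = 1" using less.IH by blast
    then show ?thesis by (metis funpow_Suc_right o_apply)
  qed
qed

lemma eta_1: "eta2 1 = 0" unfolding eta2_def by simp

lemma eta_step: "x \<ge> 2 \<Longrightarrow> eta2 x = Suc (eta2 (H2 x))"
proof -
  assume x: "x \<ge> 2"
  obtain n where n: "(H2 ^^ n) x = 1" using reach x by force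
  have "eta2 x = Suc (LEAST m. (H2 ^^ Suc m) x = 1)"
    unfolding eta2_def using n x by (intro Least_Suc) auto
  also have "(\<lambda>m. (H2 ^^ Suc m) x = 1) = (\<lambda>m. (H2 ^^ m) (H2 x) = 1)"
    by (simp only: funpow_Suc_right o_apply)
  finally show ?thesis unfolding eta2_def by simp
qed

fun g :: "nat \<Rightarrow> nat" where
  "g 0 = 2"
| "g (Suc n) = 2 ^ g n - 1"

lemma g_ge: "g n \<ge> 2"
proof (induction n)
  case (Suc n)
  have "(2::nat)^2 \<le> 2 ^ g n" using Suc by (intro power_increasing) auto
  then show ?case by simp
qed simp

lemma key: "n \<ge> 1 \<Longrightarrow> eta2 (g (n-1)) = n \<and> (\<forall>x. x \<ge> 1 \<longrightarrow> eta2 x = n \<longrightarrow> x \<ge> g (n-1))"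
proof (induction n rule: dec_induct)
  case base
  have "eta2 2 = 1" using eta_step[of 2] eta_1 by (simp add: H2_pc pc_eq)
  moreover have "x \<ge> 2" if "x \<ge> 1" "eta2 x = 1" for x
    using that eta_1 by (cases "x = 1") auto
  ultimately show ?case by simp
next
  case (step n)
  obtain m where m: "n = Suc m" using step by (cases n) auto
  have IH1: "eta2 (g m) = n" and IH2: "\<And>x. x \<ge> 1 \<Longrightarrow> eta2 x = n \<Longrightarrow> x \<ge> g m"
    using step.IH m by auto
  have "H2 (g n) = g m" using m pc_mersenne[of "g m"] by (simp add: H2_pc)
  hence "eta2 (g n) = Suc n" using eta_step[OF g_ge[of n]] IH1 by simp
  moreover have "x \<ge> g n" if x: "x \<ge> 1" "eta2 x = Suc n" for x
  proof -
    have "x \<noteq> 1" using x eta_1 by auto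
    hence x2: "x \<ge> 2" using x by auto
    hence "eta2 (H2 x) = n" using eta_step x by simp
    moreover have "H2 x \<ge> 1" using pc_pos H2_pc x by simp
    ultimately have "H2 x \<ge> g m" using IH2 by simp
    hence "(2::nat) ^ g m \<le> 2 ^ H2 x" by (intro power_increasing) auto
    also have "\<dots> \<le> x + 1" using pc_bound H2_pc by simp
    finally show ?thesis using m by simp
  qed
  ultimately show ?case by simp
qed

lemma happy_all: "x \<ge> 1 \<Longrightarrow> happy2 x"
  unfolding happy2_def using reach by auto

lemma tower: "tower_E (1/2) 2 3 k = real (g k) + 1"
proof (induction k)
  case (Suc k)
  have gk: "g k \<ge> 2" by (rule g_ge)
  have "tower_E (1/2) 2 3 (Suc k) = 1/2 * 2 powr (real (g k + 1))" using Suc by (simp add: add.commute)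
  also have "\<dots> = 1/2 * 2 ^ (g k + 1)" by (subst powr_realpow[symmetric]) auto
  also have "\<dots> = 2 ^ g k" by simp
  also have "\<dots> = real (g (Suc k)) + 1"
    using one_le_power[of "2::nat" "g k"] by (simp add: of_nat_diff)
  finally show ?case .
qed simp

theorem mainTheorem11:
  fixes \<eta> :: nat
  assumes "\<eta> \<ge> 2"
  shows "happy2 (gamma2 \<eta>) \<and> eta2 (gamma2 \<eta>) = \<eta> \<and>
         real (gamma2 \<eta>) = uparrow 1 (1/2) 2 (\<eta> - 1) 3 - 1"
proof -
  have k: "eta2 (g (\<eta>-1)) = \<eta>" "\<And>x. x \<ge> 1 \<Longrightarrow> eta2 x = \<eta> \<Longrightarrow> x \<ge> g (\<eta>-1)"
    using key[of \<eta>] assms by auto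
  have g1: "g (\<eta>-1) \<ge> 1" using g_ge[of "\<eta>-1"] by simp
  have "gamma2 \<eta> = g (\<eta>-1)" unfolding gamma2_def
  proof (rule Least_equality)
    show "1 \<le> g (\<eta>-1) \<and> happy2 (g (\<eta>-1)) \<and> eta2 (g (\<eta>-1)) = \<eta>"
      using k(1) g1 happy_all by blast
    show "\<And>y. 1 \<le> y \<and> happy2 y \<and> eta2 y = \<eta> \<Longrightarrow> g (\<eta>-1) \<le> y"
      using k(2) by blast
  qed
  moreover have "uparrow 1 (1/2) 2 (\<eta> - 1) 3 = real (g (\<eta>-1)) + 1"
    unfolding uparrow_def by (simp only: tower mult_1)
  ultimately show ?thesis using k(1) happy_all[OF g1] by (metis add_diff_cancel_right')
qed

end
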